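(* In the setting of the context, assume in addition that $V_f$, all $V_{g_i}$ and all $V_{h_j}$ are convex. Let $\bar x\in\mathbb{R}^n$ and $\bar\sigma=(\bar\lambda,\bar\mu,\bar\sigma_f,\bar\sigma_g,\bar\sigma_h)$ satisfy the critical-point conditions (i) $\nabla_x\Xi_1(\bar x,\bar\sigma)=0$; (ii) $\Lambda_f(\bar x)=\nabla V_f^*(\bar\sigma_f)$, $\Lambda_{g_i}(\bar x)=\nabla V_{g_i}^*(\bar\sigma_{g_i})$ for all $i$, $\Lambda_{h_j}(\bar x)=\nabla V_{h_j}^*(\bar\sigma_{h_j})$ for all $j$; (iii) $h(\bar x)=0$, $\bar\lambda\ge0$, $g(\bar x)\le0$, $\bar\lambda^Tg(\bar x)=0$. Suppose $\bar\sigma\in\mathcal S_a^+$ and $\mathcal S_a^+$ is convex. Then $\bar\sigma$ is a global maximizer of $P^d$ on $\mathcal S_a^+$, $\bar x$ is a global minimizer of $f$ on $\mathcal X_a$, and $$f(\bar x)=\min_{x\in\mathcal X_a}f(x)=\max_{\sigma\in\mathcal S_a^+}P^d(\sigma)=P^d(\bar\sigma).$$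
   Context: Problem: minimize $f(x)$ subject to $g_i(x)\le0$ ($i=1,\dots,m$), $h_j(x)=0$ ($j=1,\dots,p$); $g=(g_1,\dots,g_m)$, $h=(h_1,\dots,h_p)$, feasible set $\mathcal X_a=\{x\in\mathbb{R}^n: g(x)\le0,\ h(x)=0\}$. Structural assumption: $f(x)=V_f(\Lambda_f(x))+\tfrac12x^TAx-c^Tx$ with $A$ symmetric, $c\in\mathbb{R}^n$; $g_i(x)=V_{g_i}(\Lambda_{g_i}(x))$; $h_j(x)=V_{h_j}(\Lambda_{h_j}(x))$, where $\Lambda_f:\mathbb{R}^n\to\mathbb{R}^{k_f}$, $\Lambda_{g_i}:\mathbb{R}^n\to\mathbb{R}^{k_i}$, $\Lambda_{h_j}:\mathbb{R}^n\to\mathbb{R}^{l_j}$ are quadratic maps (components are polynomials of degree at most 2). Each $V\in\{V_f,V_{g_i},V_{h_j}\}$ is a "canonical function": differentiable on an open set $E\subseteq\mathbb{R}^k$ containing the image of the corresponding $\Lambda$, with $\nabla V:E\to E^*$ a bijection onto an open set $E^*$, and Legendre conjugate $V^*:E^*\to\mathbb{R}$, $V^*(\sigma)=\sigma^T\xi-V(\xi)$, $\xi=(\nabla V)^{-1}(\sigma)$, differentiable with $\nabla V^*=(\nabla V)^{-1}$. Total complementarity function: for $\sigma=(\lambda,\mu,\sigma_f,\sigma_g,\sigma_h)$ with $\lambda\in\mathbb{R}^m$, $\mu\in\mathbb{R}^p$, $\sigma_f\in E_f^*$, $\sigma_{g_i}\in E_{g_i}^*$, $\sigma_{h_j}\in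 E_{h_j}^*$, $$\Xi_1(x,\sigma)=\Lambda_f(x)^T\sigma_f-V_f^*(\sigma_f)+\sum_i\lambda_i\big[\Lambda_{g_i}(x)^T\sigma_{g_i}-V_{g_i}^*(\sigma_{g_i})\big]+\sum_j\mu_j\big[\Lambda_{h_j}(x)^T\sigma_{h_j}-V_{h_j}^*(\sigma_{h_j})\big]+\tfrac12x^TAx-c^Tx.$$ $G(\sigma)=\nabla_x^2\Xi_1(x,\sigma)$ (independent of $x$). $P^d(\sigma)$ is the value of $\Xi_1(\cdot,\sigma)$ at any of its stationary points in $x$ (equivalently $U^\Lambda(\sigma)-V_f^*(\sigma_f)-\sum_i\lambda_iV_{g_i}^*(\sigma_{g_i})-\sum_j\mu_jV_{h_j}^*(\sigma_{h_j})$, where $U^\Lambda(\sigma)$ is the stationary value in $x$ of $\Lambda_f(x)^T\sigma_f+\sum_i\lambda_i\Lambda_{g_i}(x)^T\sigma_{g_i}+\sum_j\mu_j\Lambda_{h_j}(x)^T\sigma_{h_j}+\tfrac12x^TAx-c^Tx$). Dual feasible space $\mathcal S_a$: the set of such $\sigma$ with $\lambda_i\ge0$ for all $i$, $\mu_j\neq0$ for all $j$, and for which $\Xi_1(\cdot,\sigma)$ has a stationary point. Define $\mathcal S_a^+=\{\sigma\in\mathcal S_a: G(\sigma)\succ0,\ \mu_j>0\ \forall j=1,\dots,p\}$. *)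

theory Defs
  imports "HOL-Analysis.Analysis"
begin

section \<open>The spaces R^k, represented as functions nat => real vanishing from index k on\<close>

definition Rk :: "nat \<Rightarrow> (nat \<Rightarrow> real) set" where
  "Rk k = {v. \<forall>l\<ge>k. v l = 0}"

definition dotk :: "nat \<Rightarrow> (nat \<Rightarrow> real) \<Rightarrow> (nat \<Rightarrow> real) \<Rightarrow> real" where
  "dotk k u v = (\<Sum>l<k. u l * v l)"

definition normk :: "nat \<Rightarrow> (nat \<Rightarrow> real) \<Rightarrow> real" where
  "normk k v = sqrt (dotk k v v)"

definition openk :: "nat \<Rightarrow> (nat \<Rightarrow> real) set \<Rightarrow> bool" where
  "openk k E \<longleftrightarrow> E \<subseteq> Rk k \<and>
     (\<forall>\<xi>\<in>E. \<exists>e>0. \<forall>\<eta>\<in>Rk k. normk k (\<lambda>l. \<eta> l - \<xi> l) < e \<longrightarrow> \<eta> \<in> E)"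

definition has_gradk :: "nat \<Rightarrow> ((nat \<Rightarrow> real) \<Rightarrow> real) \<Rightarrow> (nat \<Rightarrow> real) \<Rightarrow> (nat \<Rightarrow> real) \<Rightarrow> bool" where
  "has_gradk k F d \<xi> \<longleftrightarrow> d \<in> Rk k \<and>
     (\<forall>e>0. \<exists>\<delta>>0. \<forall>t\<in>Rk k. normk k t < \<delta> \<longrightarrow>
        \<bar>F (\<lambda>l. \<xi> l + t l) - F \<xi> - dotk k d t\<bar> \<le> e * normk k t)"

definition legendre_conj :: "nat \<Rightarrow> (nat \<Rightarrow> real) set \<Rightarrow> ((nat \<Rightarrow> real) \<Rightarrow> (nat \<Rightarrow> real))
                      \<Rightarrow> ((nat \<Rightarrow> real) \<Rightarrow> real) \<Rightarrow> (nat \<Rightarrow> real) \<Rightarrow> real" where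
  "legendre_conj k E dV V \<sigma> = (let \<xi> = inv_into E dV \<sigma> in dotk k \<sigma> \<xi> - V \<xi>)"

definition canonical :: "nat \<Rightarrow> (nat \<Rightarrow> real) set \<Rightarrow> (nat \<Rightarrow> real) set
                         \<Rightarrow> ((nat \<Rightarrow> real) \<Rightarrow> real) \<Rightarrow> ((nat \<Rightarrow> real) \<Rightarrow> (nat \<Rightarrow> real)) \<Rightarrow> bool" where
  "canonical k E Es V dV \<longleftrightarrow> openk k E \<and> openk k Es \<and>
     (\<forall>\<xi>\<in>E. has_gradk k V (dV \<xi>) \<xi>) \<and> bij_betw dV E Es \<and>
     (\<forall>\<sigma>\<in>Es. has_gradk k (legendre_conj k E dV V) (inv_into E dV \<sigma>) \<sigma>)"

definition convex_fun_k :: "(nat \<Rightarrow> real) set \<Rightarrow> ((nat \<Rightarrow> real) \<Rightarrow> real) \<Rightarrow> bool" where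
  "convex_fun_k E V \<longleftrightarrow> (\<forall>\<xi>\<in>E. \<forall>\<eta>\<in>E. \<forall>\<theta>::real. 0 \<le> \<theta> \<and> \<theta> \<le> 1 \<longrightarrow>
      (\<lambda>l. \<theta> * \<xi> l + (1 - \<theta>) * \<eta> l) \<in> E \<and>
      V (\<lambda>l. \<theta> * \<xi> l + (1 - \<theta>) * \<eta> l) \<le> \<theta> * V \<xi> + (1 - \<theta>) * V \<eta>)"

section \<open>Quadratic maps R^n -> R^k, given by coefficients (Q_l, b_l, c_l), l < k:
  component l is x^T Q_l x + b_l^T x + c_l\<close>

type_synonym 'n qmap = "(nat \<Rightarrow> real^'n^'n) \<times> (nat \<Rightarrow> real^'n) \<times> (nat \<Rightarrow> real)"

definition qeval :: "nat \<Rightarrow> 'n::finite qmap \<Rightarrow> real^'n \<Rightarrow> (nat \<Rightarrow> real)" where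
  "qeval k L x = (case L of (Q, b, c) \<Rightarrow>
      (\<lambda>l. if l < k then x \<bullet> (Q l *v x) + b l \<bullet> x + c l else 0))"

text \<open>Hessian (in x) of x \<mapsto> qeval k L x ^T sigma.\<close>
definition qhess :: "nat \<Rightarrow> 'n::finite qmap \<Rightarrow> (nat \<Rightarrow> real) \<Rightarrow> real^'n^'n" where
  "qhess k L \<sigma> = (case L of (Q, b, c) \<Rightarrow>
      (\<Sum>l<k. \<sigma> l *\<^sub>R (Q l + transpose (Q l))))"

text \<open>Dual variable sigma = (lambda, mu, sigma_f, sigma_g, sigma_h).\<close>
type_synonym dualv = "(nat \<Rightarrow> real) \<times> (nat \<Rightarrow> real) \<times> (nat \<Rightarrow> real) \<times> (nat \<Rightarrow> nat \<Rightarrow> real) \<times> (nat \<Rightarrow> nat \<Rightarrow> real)"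

definition dcomb :: "real \<Rightarrow> dualv \<Rightarrow> dualv \<Rightarrow> dualv" where
  "dcomb \<theta> s t = (case s of (la1, \<mu>1, sf1, sg1, sh1) \<Rightarrow> case t of (la2, \<mu>2, sf2, sg2, sh2) \<Rightarrow>
     ((\<lambda>i. \<theta> * la1 i + (1 - \<theta>) * la2 i), (\<lambda>j. \<theta> * \<mu>1 j + (1 - \<theta>) * \<mu>2 j),
      (\<lambda>l. \<theta> * sf1 l + (1 - \<theta>) * sf2 l),
      (\<lambda>i l. \<theta> * sg1 i l + (1 - \<theta>) * sg2 i l),
      (\<lambda>j l. \<theta> * sh1 j l + (1 - \<theta>) * sh2 j l)))"

definition convex_dual :: "dualv set \<Rightarrow> bool" where
  "convex_dual S \<longleftrightarrow> (\<forall>s\<in>S. \<forall>t\<in>S. \<forall>\<theta>::real. 0 \<le> \<theta> \<and> \<theta> \<le> 1 \<longrightarrow> dcomb \<theta> s t \<in> S)"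

definition Xi1 :: "real^'n^'n \<Rightarrow> real^'n \<Rightarrow> nat \<Rightarrow> nat \<Rightarrow>
    nat \<Rightarrow> 'n::finite qmap \<Rightarrow> (nat \<Rightarrow> real) set \<Rightarrow> ((nat \<Rightarrow> real) \<Rightarrow> (nat \<Rightarrow> real)) \<Rightarrow> ((nat \<Rightarrow> real) \<Rightarrow> real) \<Rightarrow>
    (nat \<Rightarrow> nat) \<Rightarrow> (nat \<Rightarrow> 'n qmap) \<Rightarrow> (nat \<Rightarrow> (nat \<Rightarrow> real) set) \<Rightarrow> (nat \<Rightarrow> (nat \<Rightarrow> real) \<Rightarrow> (nat \<Rightarrow> real)) \<Rightarrow> (nat \<Rightarrow> (nat \<Rightarrow> real) \<Rightarrow> real) \<Rightarrow>
    (nat \<Rightarrow> nat) \<Rightarrow> (nat \<Rightarrow> 'n qmap) \<Rightarrow> (nat \<Rightarrow> (nat \<Rightarrow> real) set) \<Rightarrow> (nat \<Rightarrow> (nat \<Rightarrow> real) \<Rightarrow> (nat \<Rightarrow> real)) \<Rightarrow> (nat \<Rightarrow> (nat \<Rightarrow> real) \<Rightarrow> real) \<Rightarrow>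
    real^'n \<Rightarrow> dualv \<Rightarrow> real" where
  "Xi1 A c m p kf Lf Ef dVf Vf kg Lg Eg dVg Vg kh Lh Eh dVh Vh x s =
    (case s of (la, \<mu>, sf, sg, sh) \<Rightarrow>
       dotk kf (qeval kf Lf x) sf - legendre_conj kf Ef dVf Vf sf
     + (\<Sum>i<m. la i * (dotk (kg i) (qeval (kg i) (Lg i) x) (sg i) - legendre_conj (kg i) (Eg i) (dVg i) (Vg i) (sg i)))
     + (\<Sum>j<p. \<mu> j * (dotk (kh j) (qeval (kh j) (Lh j) x) (sh j) - legendre_conj (kh j) (Eh j) (dVh j) (Vh j) (sh j)))
     + (1/2) * (x \<bullet> (A *v x)) - c \<bullet> x)"

text \<open>G(sigma) = Hessian of Xi_1(., sigma) in x.\<close>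
definition Gmat :: "real^'n^'n \<Rightarrow> nat \<Rightarrow> nat \<Rightarrow> nat \<Rightarrow> 'n::finite qmap \<Rightarrow>
    (nat \<Rightarrow> nat) \<Rightarrow> (nat \<Rightarrow> 'n qmap) \<Rightarrow> (nat \<Rightarrow> nat) \<Rightarrow> (nat \<Rightarrow> 'n qmap) \<Rightarrow> dualv \<Rightarrow> real^'n^'n" where
  "Gmat A m p kf Lf kg Lg kh Lh s = (case s of (la, \<mu>, sf, sg, sh) \<Rightarrow>
      qhess kf Lf sf + (\<Sum>i<m. la i *\<^sub>R qhess (kg i) (Lg i) (sg i))
      + (\<Sum>j<p. \<mu> j *\<^sub>R qhess (kh j) (Lh j) (sh j)) + A)"

definition pos_def :: "real^'n^'n \<Rightarrow> bool" where
  "pos_def M \<longleftrightarrow> (\<forall>y. y \<noteq> 0 \<longrightarrow> y \<bullet> (M *v y) > 0)"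


definition stationary :: "(real^'n::finite \<Rightarrow> dualv \<Rightarrow> real) \<Rightarrow> dualv \<Rightarrow> real^'n \<Rightarrow> bool" where
  "stationary Xi s x \<longleftrightarrow> ((\<lambda>y. Xi y s) has_derivative (\<lambda>h. 0)) (at x)"

definition Pd :: "(real^'n::finite \<Rightarrow> dualv \<Rightarrow> real) \<Rightarrow> dualv \<Rightarrow> real" where
  "Pd Xi s = Xi (SOME x. stationary Xi s x) s"

text \<open>Dual feasible space S_a. Components beyond the dimensions are normalised to 0.\<close>
definition Sa :: "nat \<Rightarrow> nat \<Rightarrow> (nat \<Rightarrow> real) set \<Rightarrow> (nat \<Rightarrow> (nat \<Rightarrow> real) set) \<Rightarrow> (nat \<Rightarrow> (nat \<Rightarrow> real) set)
      \<Rightarrow> (real^'n::finite \<Rightarrow> dualv \<Rightarrow> real) \<Rightarrow> dualv set" where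
  "Sa m p Efs Egs Ehs Xi = {s. case s of (la, \<mu>, sf, sg, sh) \<Rightarrow>
      (\<forall>i<m. la i \<ge> 0) \<and> (\<forall>j<p. \<mu> j \<noteq> 0) \<and>
      sf \<in> Efs \<and> (\<forall>i<m. sg i \<in> Egs i) \<and> (\<forall>j<p. sh j \<in> Ehs j) \<and>
      (\<forall>i\<ge>m. la i = 0 \<and> sg i = (\<lambda>l. 0)) \<and> (\<forall>j\<ge>p. \<mu> j = 0 \<and> sh j = (\<lambda>l. 0)) \<and>
      (\<exists>x. stationary Xi s x)}"

definition Sa_plus :: "nat \<Rightarrow> nat \<Rightarrow> (nat \<Rightarrow> real) set \<Rightarrow> (nat \<Rightarrow> (nat \<Rightarrow> real) set) \<Rightarrow> (nat \<Rightarrow> (nat \<Rightarrow> real) set)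
      \<Rightarrow> (real^'n::finite \<Rightarrow> dualv \<Rightarrow> real) \<Rightarrow> (dualv \<Rightarrow> real^'n^'n) \<Rightarrow> dualv set" where
  "Sa_plus m p Efs Egs Ehs Xi G = {s \<in> Sa m p Efs Egs Ehs Xi.
      pos_def (G s) \<and> (\<forall>j<p. fst (snd s) j > 0)}"

end

theory Submission
  imports Defs
begin


definition quadlike :: "(real^'n::finite \<Rightarrow> real) \<Rightarrow> (real^'n \<Rightarrow> real) \<Rightarrow> bool" where
  "quadlike F C \<longleftrightarrow> (\<forall>x d t. F (x + t *\<^sub>R d) = F x + t * (F (x + d) - F x - C d) + t\<^sup>2 * C d)"

lemma ql_cong: "quadlike F C \<Longrightarrow> (\<And>d. C d = C' d) \<Longrightarrow> quadlike F C'"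
  unfolding quadlike_def by simp

lemma ql_fcong: "quadlike F C \<Longrightarrow> (\<And>x. F x = F' x) \<Longrightarrow> quadlike F' C"
  unfolding quadlike_def by simp

lemma ql_const: "quadlike (\<lambda>x. a) (\<lambda>d. 0)"
  unfolding quadlike_def by simp

lemma ql_add: "quadlike F C \<Longrightarrow> quadlike G D \<Longrightarrow> quadlike (\<lambda>x. F x + G x) (\<lambda>d. C d + D d)"
  unfolding quadlike_def
proof (intro allI)
  fix x d t assume a: "\<forall>x d t. F (x + t *\<^sub>R d) = F x + t * (F (x + d) - F x - C d) + t\<^sup>2 * C d"
    and b: "\<forall>x d t. G (x + t *\<^sub>R d) = G x + t * (G (x + d) - G x - D d) + t\<^sup>2 * D d"
  show "F (x + t *\<^sub>R d) + G (x + t *\<^sub>R d) = F x + G x + t * (F (x + d) + G (x + d) - (F x + G x) - (C d + D d)) + t\<^sup>2 * (C d + D d)"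
    using a[rule_format, of x t d] b[rule_format, of x t d] by (simp add: algebra_simps)
qed

lemma ql_diff: "quadlike F C \<Longrightarrow> quadlike G D \<Longrightarrow> quadlike (\<lambda>x. F x - G x) (\<lambda>d. C d - D d)"
  unfolding quadlike_def
proof (intro allI)
  fix x d t assume a: "\<forall>x d t. F (x + t *\<^sub>R d) = F x + t * (F (x + d) - F x - C d) + t\<^sup>2 * C d"
    and b: "\<forall>x d t. G (x + t *\<^sub>R d) = G x + t * (G (x + d) - G x - D d) + t\<^sup>2 * D d"
  show "F (x + t *\<^sub>R d) - G (x + t *\<^sub>R d) = F x - G x + t * (F (x + d) - G (x + d) - (F x - G x) - (C d - D d)) + t\<^sup>2 * (C d - D d)"
    using a[rule_format, of x t d] b[rule_format, of x t d] by (simp add: algebra_simps)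
qed

lemma ql_scale: "quadlike F C \<Longrightarrow> quadlike (\<lambda>x. a * F x) (\<lambda>d. a * C d)"
  unfolding quadlike_def
proof (intro allI)
  fix x d t assume b: "\<forall>x d t. F (x + t *\<^sub>R d) = F x + t * (F (x + d) - F x - C d) + t\<^sup>2 * C d"
  show "a * F (x + t *\<^sub>R d) = a * F x + t * (a * F (x + d) - a * F x - a * C d) + t\<^sup>2 * (a * C d)"
  proof -
    have e: "F (x + t *\<^sub>R d) = F x + t * (F (x + d) - F x - C d) + t\<^sup>2 * C d" using b by blast
    show ?thesis by (simp only: e) (simp add: algebra_simps)
  qed
qed

lemma ql_sum: "finite S \<Longrightarrow> (\<And>i. i \<in> S \<Longrightarrow> quadlike (F i) (C i)) \<Longrightarrow>
   quadlike (\<lambda>x. \<Sum>i\<in>S. F i x) (\<lambda>d. \<Sum>i\<in>S. C i d)"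
proof (induction S rule: finite_induct)
  case empty then show ?case using ql_const[of 0] by simp
next
  case (insert a S)
  have "quadlike (\<lambda>x. F a x + (\<Sum>i\<in>S. F i x)) (\<lambda>d. C a d + (\<Sum>i\<in>S. C i d))"
    using insert by (intro ql_add) auto
  then show ?case using insert by simp
qed

lemma ql_quad: "quadlike (\<lambda>x. x \<bullet> (Q *v x)) (\<lambda>d. d \<bullet> (Q *v d))"
  unfolding quadlike_def
  by (simp add: algebra_simps inner_add_left inner_add_right power2_eq_square)

lemma ql_lin: "quadlike (\<lambda>x. b \<bullet> x) (\<lambda>d. 0)"
  unfolding quadlike_def by (simp add: algebra_simps inner_add_right)

lemma ql_dotq: "quadlike (\<lambda>x. dotk k (qeval k L x) \<sigma>) (\<lambda>d. \<Sum>l<k. \<sigma> l * (d \<bullet> (fst L l *v d)))"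
proof -
  obtain Q b c where L: "L = (Q, b, c)" by (cases L) auto
  have "quadlike (\<lambda>x. \<Sum>l<k. \<sigma> l * (x \<bullet> (Q l *v x) + b l \<bullet> x + c l))
          (\<lambda>d. \<Sum>l<k. \<sigma> l * (d \<bullet> (Q l *v d) + 0 + 0))"
    by (intro ql_sum ql_scale ql_add ql_quad ql_lin ql_const) auto
  then show ?thesis
    by (rule ql_fcong[OF ql_cong]) (auto simp: L dotk_def qeval_def mult.commute intro!: sum.cong)
qed

lemma qf_scale: "d \<bullet> ((a *\<^sub>R M) *v d) = a * (d \<bullet> (M *v (d::real^'n::finite)))"
proof -
  have "(a *\<^sub>R M) *v d = a *\<^sub>R (M *v d)" using scaleR_matrix_vector_assoc[of a M d] by simp
  then show ?thesis by simp
qed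

lemma qf_add: "d \<bullet> ((M + N) *v d) = d \<bullet> (M *v d) + d \<bullet> (N *v d)"
  by (simp add: matrix_vector_mult_add_rdistrib inner_add_right)

lemma qf_sum: "finite S \<Longrightarrow> d \<bullet> ((\<Sum>i\<in>S. M i) *v d) = (\<Sum>i\<in>S. d \<bullet> (M i *v d))"
  by (induction S rule: finite_induct) (auto simp: qf_add)

lemma qf_vm: "d \<bullet> (d v* M) = d \<bullet> (M *v (d::real^'n::finite))"
proof -
  have "(d v* M) \<bullet> d = d \<bullet> (M *v d)" by (rule dot_lmul_matrix)
  then show ?thesis by (simp add: inner_commute)
qed

lemma qf_transp: "d \<bullet> (transpose M *v d) = d \<bullet> (M *v (d::real^'n::finite))"
  by (simp add: dot_lmul_matrix[symmetric] inner_commute)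

lemma qf_qhess: "d \<bullet> (qhess k L \<sigma> *v d) = 2 * (\<Sum>l<k. \<sigma> l * (d \<bullet> (fst L l *v d)))"
proof -
  obtain Q b c where L: "L = (Q, b, c)" by (cases L) auto
  show ?thesis
    by (simp add: L qhess_def qf_sum qf_scale qf_add qf_transp qf_vm sum_distrib_left algebra_simps)
qed



lemma dotk_comm: "dotk k u v = dotk k v u"
  unfolding dotk_def by (simp add: mult.commute)
lemma dotk_scale_r: "dotk k d (\<lambda>l. a * t l) = a * dotk k d t"
  unfolding dotk_def by (simp add: sum_distrib_left algebra_simps)
lemma dotk_diff_r: "dotk k d (\<lambda>l. u l - v l) = dotk k d u - dotk k d v"
  unfolding dotk_def by (simp add: sum_subtractf algebra_simps)
lemma dotk_self_nonneg: "0 \<le> dotk k t t"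
  unfolding dotk_def by (intro sum_nonneg) simp
lemma normk_nonneg: "0 \<le> normk k t"
  unfolding normk_def using dotk_self_nonneg by simp
lemma normk_sq: "(normk k t)\<^sup>2 = dotk k t t"
  unfolding normk_def using dotk_self_nonneg by simp
lemma normk_scale: "0 \<le> a \<Longrightarrow> normk k (\<lambda>l. a * t l) = a * normk k t"
proof -
  assume a: "0 \<le> a"
  have "dotk k (\<lambda>l. a * t l) (\<lambda>l. a * t l) = a\<^sup>2 * dotk k t t"
    by (simp add: dotk_scale_r dotk_comm[of k "\<lambda>l. a * t l"] power2_eq_square)
  then show ?thesis unfolding normk_def using a by (simp add: real_sqrt_mult)
qed

lemma grad_ineq:
  assumes cv: "convex_fun_k E V" and sub: "E \<subseteq> Rk k" and eta: "\<eta> \<in> E" and xi: "\<xi> \<in> E"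
    and g: "has_gradk k V d \<eta>"
  shows "dotk k d \<xi> - dotk k d \<eta> \<le> V \<xi> - V \<eta>"
proof (rule ccontr)
  assume neg: "\<not> ?thesis"
  define t where "t = (\<lambda>l. \<xi> l - \<eta> l)"
  have "\<xi> \<in> Rk k" "\<eta> \<in> Rk k" using sub eta xi by auto
  then have tR: "t \<in> Rk k" by (simp add: Rk_def t_def)
  define nt where "nt = normk k t"
  have nt0: "nt \<ge> 0" using normk_nonneg nt_def by simp
  define gap where "gap = dotk k d t - (V \<xi> - V \<eta>)"
  have gap: "gap > 0" using neg by (simp add: gap_def t_def dotk_diff_r)
  define e where "e = gap / (2 * (nt + 1))"
  have e: "e > 0" using gap nt0 by (simp add: e_def)
  from g e obtain \<delta> where d0: "\<delta> > 0" and H: "\<forall>s\<in>Rk k. normk k s < \<delta> \<longrightarrow>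
        \<bar>V (\<lambda>l. \<eta> l + s l) - V \<eta> - dotk k d s\<bar> \<le> e * normk k s"
    unfolding has_gradk_def by blast
  define \<theta> where "\<theta> = min 1 (\<delta> / (2 * (nt + 1)))"
  have th0: "\<theta> > 0" using d0 nt0 by (simp add: \<theta>_def)
  have th1: "\<theta> \<le> 1" by (simp add: \<theta>_def)
  define s where "s = (\<lambda>l. \<theta> * t l)"
  have sR: "s \<in> Rk k" using tR by (simp add: Rk_def s_def)
  have ns: "normk k s = \<theta> * nt" using th0 by (simp add: s_def normk_scale nt_def)
  have "\<theta> * nt \<le> \<delta> / (2 * (nt + 1)) * nt"
    using nt0 by (intro mult_right_mono) (auto simp: \<theta>_def)
  also have "\<dots> < \<delta>"
  proof -
    have "\<delta> / (2 * (nt + 1)) * nt = \<delta> * (nt / (2 * (nt + 1)))" by simp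
    also have "\<dots> < \<delta> * 1" using d0 nt0 by (intro mult_strict_left_mono) (auto simp: field_simps)
    finally show ?thesis by simp
  qed
  finally have "normk k s < \<delta>" using ns by simp
  with H sR have Hs: "\<bar>V (\<lambda>l. \<eta> l + s l) - V \<eta> - dotk k d s\<bar> \<le> e * normk k s" by blast
  have pt: "(\<lambda>l. \<eta> l + s l) = (\<lambda>l. \<theta> * \<xi> l + (1 - \<theta>) * \<eta> l)"
    by (auto simp: s_def t_def algebra_simps)
  have conv: "V (\<lambda>l. \<theta> * \<xi> l + (1 - \<theta>) * \<eta> l) \<le> \<theta> * V \<xi> + (1 - \<theta>) * V \<eta>"
    using cv xi eta th0 th1 unfolding convex_fun_k_def by auto
  have ds: "dotk k d s = \<theta> * dotk k d t" by (simp add: s_def dotk_scale_r)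
  have "\<theta> * dotk k d t - e * (\<theta> * nt) \<le> \<theta> * (V \<xi> - V \<eta>)"
    using Hs conv pt ds ns by (simp add: algebra_simps abs_le_iff)
  then have "\<theta> * (dotk k d t - e * nt) \<le> \<theta> * (V \<xi> - V \<eta>)" by (simp add: algebra_simps)
  then have A: "dotk k d t - e * nt \<le> V \<xi> - V \<eta>" using th0 by simp
  have "e * nt = gap * (nt / (2 * (nt + 1)))" by (simp add: e_def)
  also have "\<dots> \<le> gap * (1/2)" using gap nt0 by (intro mult_left_mono) (auto simp: field_simps)
  finally have "e * nt \<le> gap / 2" by simp
  with A gap show False by (simp add: gap_def)
qed

lemma canon_facts:
  assumes "canonical k E Es V dV" "\<sigma> \<in> Es"
  shows "inv_into E dV \<sigma> \<in> E" "dV (inv_into E dV \<sigma>) = \<sigma>" "E \<subseteq> Rk k"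
    "has_gradk k V (dV (inv_into E dV \<sigma>)) (inv_into E dV \<sigma>)"
    "has_gradk k (legendre_conj k E dV V) (inv_into E dV \<sigma>) \<sigma>"
proof -
  have b: "bij_betw dV E Es" using assms(1) unfolding canonical_def by blast
  then have "\<sigma> \<in> dV ` E" using assms(2) bij_betw_imp_surj_on by blast
  then show i: "inv_into E dV \<sigma> \<in> E" "dV (inv_into E dV \<sigma>) = \<sigma>"
    by (rule inv_into_into, rule f_inv_into_f)
  show "E \<subseteq> Rk k" using assms(1) unfolding canonical_def openk_def by blast
  show "has_gradk k V (dV (inv_into E dV \<sigma>)) (inv_into E dV \<sigma>)"
    using assms(1) i unfolding canonical_def by blast
  show "has_gradk k (legendre_conj k E dV V) (inv_into E dV \<sigma>) \<sigma>"
    using assms unfolding canonical_def by blast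
qed

lemma FY:
  assumes c: "canonical k E Es V dV" and cv: "convex_fun_k E V" and xi: "\<xi> \<in> E" and s: "\<sigma> \<in> Es"
  shows "dotk k \<xi> \<sigma> - legendre_conj k E dV V \<sigma> \<le> V \<xi>"
proof -
  note cf = canon_facts[OF c s]
  define \<eta> where "\<eta> = inv_into E dV \<sigma>"
  have "dotk k \<sigma> \<xi> - dotk k \<sigma> \<eta> \<le> V \<xi> - V \<eta>"
    using grad_ineq[OF cv cf(3) cf(1) xi cf(4)] cf(2) by (simp add: \<eta>_def)
  then show ?thesis unfolding legendre_conj_def Let_def \<eta>_def[symmetric]
    by (simp add: dotk_comm)
qed

lemma grad_unique:
  assumes g1: "has_gradk k F d1 \<xi>" and g2: "has_gradk k F d2 \<xi>"
  shows "d1 = d2"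
proof (rule ccontr)
  assume ne: "d1 \<noteq> d2"
  define w where "w = (\<lambda>l. d1 l - d2 l)"
  have R: "d1 \<in> Rk k" "d2 \<in> Rk k" using g1 g2 unfolding has_gradk_def by auto
  have wR: "w \<in> Rk k" using R by (simp add: Rk_def w_def)
  obtain l where l: "d1 l \<noteq> d2 l" using ne by auto
  have lk: "l < k"
  proof (rule ccontr)
    assume "\<not> l < k"
    then have "d1 l = 0" "d2 l = 0" using R unfolding Rk_def by auto
    with l show False by simp
  qed
  have "0 < (w l)\<^sup>2" using l by (simp add: w_def)
  also have "\<dots> = w l * w l" by (simp add: power2_eq_square)
  also have "\<dots> \<le> dotk k w w" unfolding dotk_def
    using lk by (intro member_le_sum) auto
  finally have dw: "dotk k w w > 0" .
  define nw where "nw = normk k w"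
  have nw: "nw > 0" using dw by (simp add: nw_def normk_def)
  have nw2: "nw * nw = dotk k w w" using normk_sq[of k w] by (simp add: nw_def power2_eq_square)
  define e where "e = nw / 4"
  have e: "e > 0" using nw by (simp add: e_def)
  from g1 e obtain \<delta>1 where d1: "\<delta>1 > 0" and H1: "\<forall>t\<in>Rk k. normk k t < \<delta>1 \<longrightarrow>
        \<bar>F (\<lambda>l. \<xi> l + t l) - F \<xi> - dotk k d1 t\<bar> \<le> e * normk k t"
    unfolding has_gradk_def by blast
  from g2 e obtain \<delta>2 where d2: "\<delta>2 > 0" and H2: "\<forall>t\<in>Rk k. normk k t < \<delta>2 \<longrightarrow>
        \<bar>F (\<lambda>l. \<xi> l + t l) - F \<xi> - dotk k d2 t\<bar> \<le> e * normk k t"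
    unfolding has_gradk_def by blast
  define \<theta> where "\<theta> = min \<delta>1 \<delta>2 / (2 * nw)"
  have th: "\<theta> > 0" using d1 d2 nw by (simp add: \<theta>_def)
  define t where "t = (\<lambda>l. \<theta> * w l)"
  have tR: "t \<in> Rk k" using wR by (simp add: Rk_def t_def)
  have nt: "normk k t = \<theta> * nw" using th by (simp add: t_def normk_scale nw_def)
  have "\<theta> * nw = min \<delta>1 \<delta>2 / 2" using nw by (simp add: \<theta>_def)
  then have "normk k t < \<delta>1" "normk k t < \<delta>2" using nt d1 d2 by auto
  with H1 H2 tR have a1: "\<bar>F (\<lambda>l. \<xi> l + t l) - F \<xi> - dotk k d1 t\<bar> \<le> e * normk k t"
    and a2: "\<bar>F (\<lambda>l. \<xi> l + t l) - F \<xi> - dotk k d2 t\<bar> \<le> e * normk k t" by blast+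
  have "dotk k d1 t - dotk k d2 t = dotk k w t"
    by (simp add: w_def dotk_comm[of k _ t] dotk_diff_r)
  also have "\<dots> = \<theta> * (nw * nw)" by (simp add: t_def dotk_scale_r nw2)
  finally have eq: "dotk k d1 t - dotk k d2 t = \<theta> * (nw * nw)" .
  have "\<theta> * (nw * nw) \<le> 2 * (e * normk k t)" using a1 a2 eq by (simp add: abs_le_iff)
  also have "\<dots> = \<theta> * (nw * nw) / 2" by (simp add: nt e_def)
  finally show False using th nw by (simp add: field_simps)
qed

lemma FY_eq:
  assumes c: "canonical k E Es V dV" and s: "\<sigma> \<in> Es"
    and g: "has_gradk k (legendre_conj k E dV V) \<xi> \<sigma>"
  shows "dotk k \<xi> \<sigma> - legendre_conj k E dV V \<sigma> = V \<xi>"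
proof -
  note cf = canon_facts[OF c s]
  have "\<xi> = inv_into E dV \<sigma>" using grad_unique[OF g cf(5)] .
  then show ?thesis unfolding legendre_conj_def Let_def by (simp add: dotk_comm)
qed

lemma ql_min:
  assumes q: "quadlike F C" and nn: "\<And>d. C d \<ge> 0" and st: "(F has_derivative (\<lambda>h. 0)) (at x)"
  shows "F x \<le> F y"
proof -
  define d where "d = y - x"
  define B where "B = F (x + d) - F x - C d"
  have phi: "\<And>t. F (x + t *\<^sub>R d) = F x + t * B + t\<^sup>2 * C d"
    using q unfolding quadlike_def B_def by auto
  have lin: "((\<lambda>t::real. x + t *\<^sub>R d) has_derivative (\<lambda>t. t *\<^sub>R d)) (at 0)"
    by (auto intro!: derivative_eq_intros)
  have st': "(F has_derivative (\<lambda>h. 0)) (at ((\<lambda>t::real. x + t *\<^sub>R d) 0))" using st by simp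
  have "((F \<circ> (\<lambda>t::real. x + t *\<^sub>R d)) has_derivative ((\<lambda>h. 0) \<circ> (\<lambda>t. t *\<^sub>R d))) (at 0)"
    using diff_chain_at[OF lin st'] .
  then have "((\<lambda>t. F x + t * B + t\<^sup>2 * C d) has_derivative (\<lambda>h. 0)) (at 0)"
    by (simp add: o_def phi)
  moreover have "(\<lambda>h::real. 0::real) = (*) 0" by auto
  ultimately have D1: "((\<lambda>t. F x + t * B + t\<^sup>2 * C d) has_real_derivative 0) (at 0)"
    by (simp add: has_field_derivative_def)
  have D2: "((\<lambda>t. F x + t * B + t\<^sup>2 * C d) has_real_derivative B) (at 0)"
    by (auto intro!: derivative_eq_intros)
  have "B = 0" using DERIV_unique[OF D2 D1] .
  then have "F y = F x + C d" by (simp add: B_def d_def)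
  then show ?thesis using nn[of d] by simp
qed



theorem theorem2:
  fixes A :: "real^'n::finite^'n" and c :: "real^'n"
    and m p kf :: nat and kg kh :: "nat \<Rightarrow> nat"
    and Lf :: "'n qmap" and Lg Lh :: "nat \<Rightarrow> 'n qmap"
    and Ef Efs :: "(nat \<Rightarrow> real) set" and Vf :: "(nat \<Rightarrow> real) \<Rightarrow> real"
    and dVf :: "(nat \<Rightarrow> real) \<Rightarrow> (nat \<Rightarrow> real)"
    and Eg Egs Eh Ehs :: "nat \<Rightarrow> (nat \<Rightarrow> real) set"
    and Vg Vh :: "nat \<Rightarrow> (nat \<Rightarrow> real) \<Rightarrow> real"
    and dVg dVh :: "nat \<Rightarrow> (nat \<Rightarrow> real) \<Rightarrow> (nat \<Rightarrow> real)"
    and f :: "real^'n \<Rightarrow> real" and g h :: "nat \<Rightarrow> real^'n \<Rightarrow> real"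
    and Xi :: "real^'n \<Rightarrow> dualv \<Rightarrow> real" and G :: "dualv \<Rightarrow> real^'n^'n"
    and Xa :: "(real^'n) set"
    and xb :: "real^'n"
    and lb mub sfb :: "nat \<Rightarrow> real" and sgb shb :: "nat \<Rightarrow> nat \<Rightarrow> real"
  defines "f \<equiv> \<lambda>x. Vf (qeval kf Lf x) + (1/2) * (x \<bullet> (A *v x)) - c \<bullet> x"
    and "g \<equiv> \<lambda>i x. Vg i (qeval (kg i) (Lg i) x)"
    and "h \<equiv> \<lambda>j x. Vh j (qeval (kh j) (Lh j) x)"
    and "Xa \<equiv> {x. (\<forall>i<m. g i x \<le> 0) \<and> (\<forall>j<p. h j x = 0)}"
    and "Xi \<equiv> Xi1 A c m p kf Lf Ef dVf Vf kg Lg Eg dVg Vg kh Lh Eh dVh Vh"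
    and "G \<equiv> Gmat A m p kf Lf kg Lg kh Lh"
  assumes A_sym: "transpose A = A"
    and can_f: "canonical kf Ef Efs Vf dVf"
    and can_g: "\<forall>i<m. canonical (kg i) (Eg i) (Egs i) (Vg i) (dVg i)"
    and can_h: "\<forall>j<p. canonical (kh j) (Eh j) (Ehs j) (Vh j) (dVh j)"
    and img_f: "\<forall>x. qeval kf Lf x \<in> Ef"
    and img_g: "\<forall>i<m. \<forall>x. qeval (kg i) (Lg i) x \<in> Eg i"
    and img_h: "\<forall>j<p. \<forall>x. qeval (kh j) (Lh j) x \<in> Eh j"
    and cvx_f: "convex_fun_k Ef Vf"
    and cvx_g: "\<forall>i<m. convex_fun_k (Eg i) (Vg i)"
    and cvx_h: "\<forall>j<p. convex_fun_k (Eh j) (Vh j)"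
    and crit1: "stationary Xi (lb, mub, sfb, sgb, shb) xb"
    and crit2f: "has_gradk kf (legendre_conj kf Ef dVf Vf) (qeval kf Lf xb) sfb"
    and crit2g: "\<forall>i<m. has_gradk (kg i) (legendre_conj (kg i) (Eg i) (dVg i) (Vg i)) (qeval (kg i) (Lg i) xb) (sgb i)"
    and crit2h: "\<forall>j<p. has_gradk (kh j) (legendre_conj (kh j) (Eh j) (dVh j) (Vh j)) (qeval (kh j) (Lh j) xb) (shb j)"
    and crit3: "(\<forall>j<p. h j xb = 0) \<and> (\<forall>i<m. lb i \<ge> 0) \<and> (\<forall>i<m. g i xb \<le> 0)
                \<and> (\<Sum>i<m. lb i * g i xb) = 0"
    and in_Sa_plus: "(lb, mub, sfb, sgb, shb) \<in> Sa_plus m p Efs Egs Ehs Xi G"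
    and Sa_plus_convex: "convex_dual (Sa_plus m p Efs Egs Ehs Xi G)"
  shows "(\<forall>s\<in>Sa_plus m p Efs Egs Ehs Xi G. Pd Xi s \<le> Pd Xi (lb, mub, sfb, sgb, shb))
       \<and> xb \<in> Xa \<and> (\<forall>x\<in>Xa. f xb \<le> f x)
       \<and> f xb = Pd Xi (lb, mub, sfb, sgb, shb)"
proof -
  have qlXi: "quadlike (\<lambda>x. Xi x (la,mu,sf,sg,sh)) (\<lambda>d. (1/2) * (d \<bullet> (G (la,mu,sf,sg,sh) *v d)))"
    for la mu sf :: "nat \<Rightarrow> real" and sg sh :: "nat \<Rightarrow> nat \<Rightarrow> real"
  proof -
    have "quadlike (\<lambda>x. dotk kf (qeval kf Lf x) sf - legendre_conj kf Ef dVf Vf sf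
     + (\<Sum>i<m. la i * (dotk (kg i) (qeval (kg i) (Lg i) x) (sg i) - legendre_conj (kg i) (Eg i) (dVg i) (Vg i) (sg i)))
     + (\<Sum>j<p. mu j * (dotk (kh j) (qeval (kh j) (Lh j) x) (sh j) - legendre_conj (kh j) (Eh j) (dVh j) (Vh j) (sh j)))
     + (1/2) * (x \<bullet> (A *v x)) - c \<bullet> x)
     (\<lambda>d. (\<Sum>l<kf. sf l * (d \<bullet> (fst Lf l *v d))) - 0
       + (\<Sum>i<m. la i * ((\<Sum>l<kg i. sg i l * (d \<bullet> (fst (Lg i) l *v d))) - 0))
       + (\<Sum>j<p. mu j * ((\<Sum>l<kh j. sh j l * (d \<bullet> (fst (Lh j) l *v d))) - 0))
       + (1/2) * (d \<bullet> (A *v d)) - 0)"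
    proof -
      have q1: "quadlike (\<lambda>x. dotk kf (qeval kf Lf x) sf - legendre_conj kf Ef dVf Vf sf)
         (\<lambda>d. (\<Sum>l<kf. sf l * (d \<bullet> (fst Lf l *v d))) - 0)"
        by (rule ql_diff[OF ql_dotq ql_const])
      have q2: "quadlike (\<lambda>x. \<Sum>i<m. la i * (dotk (kg i) (qeval (kg i) (Lg i) x) (sg i) - legendre_conj (kg i) (Eg i) (dVg i) (Vg i) (sg i)))
         (\<lambda>d. \<Sum>i<m. la i * ((\<Sum>l<kg i. sg i l * (d \<bullet> (fst (Lg i) l *v d))) - 0))"
        by (rule ql_sum[OF finite_lessThan], rule ql_scale[OF ql_diff[OF ql_dotq ql_const]])
      have q3: "quadlike (\<lambda>x. \<Sum>j<p. mu j * (dotk (kh j) (qeval (kh j) (Lh j) x) (sh j) - legendre_conj (kh j) (Eh j) (dVh j) (Vh j) (sh j)))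
         (\<lambda>d. \<Sum>j<p. mu j * ((\<Sum>l<kh j. sh j l * (d \<bullet> (fst (Lh j) l *v d))) - 0))"
        by (rule ql_sum[OF finite_lessThan], rule ql_scale[OF ql_diff[OF ql_dotq ql_const]])
      have q4: "quadlike (\<lambda>x. (1/2) * (x \<bullet> (A *v x))) (\<lambda>d. (1/2) * (d \<bullet> (A *v d)))"
        by (rule ql_scale[OF ql_quad])
      show ?thesis by (rule ql_diff[OF ql_add[OF ql_add[OF ql_add[OF q1 q2] q3] q4] ql_lin])
    qed
    then show ?thesis
    proof (rule ql_fcong[OF ql_cong])
      fix d :: "real^'n"
      show "(\<Sum>l<kf. sf l * (d \<bullet> (fst Lf l *v d))) - 0
       + (\<Sum>i<m. la i * ((\<Sum>l<kg i. sg i l * (d \<bullet> (fst (Lg i) l *v d))) - 0))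
       + (\<Sum>j<p. mu j * ((\<Sum>l<kh j. sh j l * (d \<bullet> (fst (Lh j) l *v d))) - 0))
       + (1/2) * (d \<bullet> (A *v d)) - 0 = (1/2) * (d \<bullet> (G (la,mu,sf,sg,sh) *v d))"
      proof -
        have gexp: "G (la,mu,sf,sg,sh) = qhess kf Lf sf + (\<Sum>i<m. la i *\<^sub>R qhess (kg i) (Lg i) (sg i))
          + (\<Sum>j<p. mu j *\<^sub>R qhess (kh j) (Lh j) (sh j)) + A"
          by (simp only: G_def Gmat_def prod.case)
        have s1: "(\<Sum>i<m. la i * (2 * (\<Sum>l<kg i. sg i l * (d \<bullet> (fst (Lg i) l *v d)))))
          = 2 * (\<Sum>i<m. la i * (\<Sum>l<kg i. sg i l * (d \<bullet> (fst (Lg i) l *v d))))"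
          by (simp only: sum_distrib_left mult.left_commute)
        have s2: "(\<Sum>j<p. mu j * (2 * (\<Sum>l<kh j. sh j l * (d \<bullet> (fst (Lh j) l *v d)))))
          = 2 * (\<Sum>j<p. mu j * (\<Sum>l<kh j. sh j l * (d \<bullet> (fst (Lh j) l *v d))))"
          by (simp only: sum_distrib_left mult.left_commute)
        have "d \<bullet> (G (la,mu,sf,sg,sh) *v d) = 2 * (\<Sum>l<kf. sf l * (d \<bullet> (fst Lf l *v d)))
          + (\<Sum>i<m. la i * (2 * (\<Sum>l<kg i. sg i l * (d \<bullet> (fst (Lg i) l *v d)))))
          + (\<Sum>j<p. mu j * (2 * (\<Sum>l<kh j. sh j l * (d \<bullet> (fst (Lh j) l *v d)))))
          + d \<bullet> (A *v d)"
          unfolding gexp qf_add qf_sum[OF finite_lessThan] qf_scale qf_qhess ..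
        then show ?thesis unfolding s1 s2 diff_zero by linarith
      qed
    next
      fix x :: "real^'n"
      show "dotk kf (qeval kf Lf x) sf - legendre_conj kf Ef dVf Vf sf
     + (\<Sum>i<m. la i * (dotk (kg i) (qeval (kg i) (Lg i) x) (sg i) - legendre_conj (kg i) (Eg i) (dVg i) (Vg i) (sg i)))
     + (\<Sum>j<p. mu j * (dotk (kh j) (qeval (kh j) (Lh j) x) (sh j) - legendre_conj (kh j) (Eh j) (dVh j) (Vh j) (sh j)))
     + (1/2) * (x \<bullet> (A *v x)) - c \<bullet> x = Xi x (la,mu,sf,sg,sh)"
        by (simp only: Xi_def Xi1_def prod.case)
    qed
  qed
  have minXi: "Xi x s \<le> Xi y s" if pd: "pos_def (G s)" and st: "stationary Xi s x" for s :: dualv and x y :: "real^'n"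
  proof -
    obtain la mu sf sg sh where s: "s = (la,mu,sf,sg,sh)" by (cases s) auto
    show ?thesis unfolding s
    proof (rule ql_min[OF qlXi[of la mu sf sg sh], of x y])
      fix d :: "real^'n" show "0 \<le> (1/2) * (d \<bullet> (G (la,mu,sf,sg,sh) *v d))"
        using pd unfolding s pos_def_def
        by (cases "d = 0") (auto intro: less_imp_le)
    next
      show "((\<lambda>x. Xi x (la, mu, sf, sg, sh)) has_derivative (\<lambda>h. 0)) (at x)"
        using st unfolding s stationary_def .
    qed
  qed
  have weak: "Xi x (la,mu,sf,sg,sh) \<le> f x"
    if la: "\<forall>i<m. la i \<ge> 0" and mu: "\<forall>j<p. mu j > 0" and sf: "sf \<in> Efs"
      and sg: "\<forall>i<m. sg i \<in> Egs i" and sh: "\<forall>j<p. sh j \<in> Ehs j" and x: "x \<in> Xa"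
    for la mu sf :: "nat \<Rightarrow> real" and sg sh :: "nat \<Rightarrow> nat \<Rightarrow> real" and x :: "real^'n"
  proof -
    have t1: "dotk kf (qeval kf Lf x) sf - legendre_conj kf Ef dVf Vf sf \<le> Vf (qeval kf Lf x)"
      using FY[OF can_f cvx_f] img_f sf by blast
    have t2: "(\<Sum>i<m. la i * (dotk (kg i) (qeval (kg i) (Lg i) x) (sg i) - legendre_conj (kg i) (Eg i) (dVg i) (Vg i) (sg i)))
       \<le> (\<Sum>i<m. la i * g i x)"
    proof (rule sum_mono)
      fix i assume i: "i \<in> {..<m}"
      then show "la i * (dotk (kg i) (qeval (kg i) (Lg i) x) (sg i) - legendre_conj (kg i) (Eg i) (dVg i) (Vg i) (sg i))
         \<le> la i * g i x"
      proof -
        have im: "i < m" using i by simp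
        have "dotk (kg i) (qeval (kg i) (Lg i) x) (sg i) - legendre_conj (kg i) (Eg i) (dVg i) (Vg i) (sg i) \<le> g i x"
          unfolding g_def
          using FY[OF can_g[rule_format, OF im] cvx_g[rule_format, OF im] img_g[rule_format, OF im] sg[rule_format, OF im]] .
        then show ?thesis using la im by (intro mult_left_mono) auto
      qed
    qed
    have t3: "(\<Sum>i<m. la i * g i x) \<le> 0"
      using x la unfolding Xa_def by (auto intro!: sum_nonpos mult_nonneg_nonpos)
    have t4: "(\<Sum>j<p. mu j * (dotk (kh j) (qeval (kh j) (Lh j) x) (sh j) - legendre_conj (kh j) (Eh j) (dVh j) (Vh j) (sh j)))
       \<le> (\<Sum>j<p. mu j * h j x)"
    proof (rule sum_mono)
      fix j assume j: "j \<in> {..<p}"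
      then show "mu j * (dotk (kh j) (qeval (kh j) (Lh j) x) (sh j) - legendre_conj (kh j) (Eh j) (dVh j) (Vh j) (sh j))
         \<le> mu j * h j x"
      proof -
        have im: "j < p" using j by simp
        have "dotk (kh j) (qeval (kh j) (Lh j) x) (sh j) - legendre_conj (kh j) (Eh j) (dVh j) (Vh j) (sh j) \<le> h j x"
          unfolding h_def
          using FY[OF can_h[rule_format, OF im] cvx_h[rule_format, OF im] img_h[rule_format, OF im] sh[rule_format, OF im]] .
        then show ?thesis using mu im by (intro mult_left_mono) auto
      qed
    qed
    have t5: "(\<Sum>j<p. mu j * h j x) = 0"
      using x unfolding Xa_def by simp
    have ex: "Xi x (la,mu,sf,sg,sh) = dotk kf (qeval kf Lf x) sf - legendre_conj kf Ef dVf Vf sf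
     + (\<Sum>i<m. la i * (dotk (kg i) (qeval (kg i) (Lg i) x) (sg i) - legendre_conj (kg i) (Eg i) (dVg i) (Vg i) (sg i)))
     + (\<Sum>j<p. mu j * (dotk (kh j) (qeval (kh j) (Lh j) x) (sh j) - legendre_conj (kh j) (Eh j) (dVh j) (Vh j) (sh j)))
     + (1/2) * (x \<bullet> (A *v x)) - c \<bullet> x" by (simp only: Xi_def Xi1_def prod.case)
    have fx: "f x = Vf (qeval kf Lf x) + (1/2) * (x \<bullet> (A *v x)) - c \<bullet> x" by (simp only: f_def)
    show ?thesis unfolding ex fx using t1 t2 t3 t4 t5 by linarith
  qed
  have sbm: "sfb \<in> Efs" "\<forall>i<m. sgb i \<in> Egs i" "\<forall>j<p. shb j \<in> Ehs j" "\<forall>j<p. mub j > 0"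
    "pos_def (G (lb, mub, sfb, sgb, shb))"
    using in_Sa_plus unfolding Sa_plus_def Sa_def by auto
  have xbXa: "xb \<in> Xa" using crit3 unfolding Xa_def by auto
  have eq: "Xi xb (lb, mub, sfb, sgb, shb) = f xb"
  proof -
    have e1: "dotk kf (qeval kf Lf xb) sfb - legendre_conj kf Ef dVf Vf sfb = Vf (qeval kf Lf xb)"
      using FY_eq[OF can_f sbm(1) crit2f] .
    have e2: "(\<Sum>i<m. lb i * (dotk (kg i) (qeval (kg i) (Lg i) xb) (sgb i) - legendre_conj (kg i) (Eg i) (dVg i) (Vg i) (sgb i)))
       = (\<Sum>i<m. lb i * g i xb)"
    proof (rule sum.cong)
      fix i assume "i \<in> {..<m}"
      then have im: "i < m" by simp
      show "lb i * (dotk (kg i) (qeval (kg i) (Lg i) xb) (sgb i) - legendre_conj (kg i) (Eg i) (dVg i) (Vg i) (sgb i)) = lb i * g i xb"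
        unfolding g_def using FY_eq[OF can_g[rule_format, OF im] sbm(2)[rule_format, OF im] crit2g[rule_format, OF im]] by simp
    qed simp
    have e3: "(\<Sum>j<p. mub j * (dotk (kh j) (qeval (kh j) (Lh j) xb) (shb j) - legendre_conj (kh j) (Eh j) (dVh j) (Vh j) (shb j)))
       = (\<Sum>j<p. mub j * h j xb)"
    proof (rule sum.cong)
      fix i assume "i \<in> {..<p}"
      then have im: "i < p" by simp
      show "mub i * (dotk (kh i) (qeval (kh i) (Lh i) xb) (shb i) - legendre_conj (kh i) (Eh i) (dVh i) (Vh i) (shb i)) = mub i * h i xb"
        unfolding h_def using FY_eq[OF can_h[rule_format, OF im] sbm(3)[rule_format, OF im] crit2h[rule_format, OF im]] by simp
    qed simp
    have e4: "(\<Sum>j<p. mub j * h j xb) = 0" using crit3 by simp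
    have ex: "Xi xb (lb, mub, sfb, sgb, shb) = dotk kf (qeval kf Lf xb) sfb - legendre_conj kf Ef dVf Vf sfb
     + (\<Sum>i<m. lb i * (dotk (kg i) (qeval (kg i) (Lg i) xb) (sgb i) - legendre_conj (kg i) (Eg i) (dVg i) (Vg i) (sgb i)))
     + (\<Sum>j<p. mub j * (dotk (kh j) (qeval (kh j) (Lh j) xb) (shb j) - legendre_conj (kh j) (Eh j) (dVh j) (Vh j) (shb j)))
     + (1/2) * (xb \<bullet> (A *v xb)) - c \<bullet> xb" by (simp only: Xi_def Xi1_def prod.case)
    have fx: "f xb = Vf (qeval kf Lf xb) + (1/2) * (xb \<bullet> (A *v xb)) - c \<bullet> xb" by (simp only: f_def)
    have e5: "(\<Sum>i<m. lb i * g i xb) = 0" using crit3 by blast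
    show ?thesis unfolding ex fx using e1 e2 e3 e4 e5 by linarith
  qed
  have pdb: "Pd Xi (lb, mub, sfb, sgb, shb) = Xi xb (lb, mub, sfb, sgb, shb)"
  proof -
    define x' where "x' = (SOME x. stationary Xi (lb, mub, sfb, sgb, shb) x)"
    have st': "stationary Xi (lb, mub, sfb, sgb, shb) x'"
      unfolding x'_def using crit1 by (rule someI)
    show ?thesis unfolding Pd_def x'_def[symmetric]
      using minXi[OF sbm(5) st', of xb] minXi[OF sbm(5) crit1, of x'] by simp
  qed
  have dual: "Pd Xi s \<le> Pd Xi (lb, mub, sfb, sgb, shb)" if s: "s \<in> Sa_plus m p Efs Egs Ehs Xi G" for s :: dualv
  proof -
    obtain la mu sf sg sh where sd: "s = (la,mu,sf,sg,sh)" by (cases s) auto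
    have sm: "\<forall>i<m. la i \<ge> 0" "sf \<in> Efs" "\<forall>i<m. sg i \<in> Egs i" "\<forall>j<p. sh j \<in> Ehs j" "\<forall>j<p. mu j > 0"
      "pos_def (G s)" "\<exists>x. stationary Xi s x"
      using s unfolding sd Sa_plus_def Sa_def by auto
    have st: "stationary Xi s (SOME x. stationary Xi s x)" using sm(7) by (rule someI_ex)
    have "Pd Xi s \<le> Xi xb s" unfolding Pd_def using minXi[OF sm(6) st] .
    also have "\<dots> \<le> f xb" unfolding sd using weak[OF sm(1) sm(5) sm(2) sm(3) sm(4) xbXa] .
    finally show ?thesis using pdb eq by simp
  qed
  have primal: "\<forall>x\<in>Xa. f xb \<le> f x"
  proof
    fix x assume x: "x \<in> Xa"
    have "f xb = Xi xb (lb, mub, sfb, sgb, shb)" using eq by simp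
    also have "\<dots> \<le> Xi x (lb, mub, sfb, sgb, shb)" using minXi[OF sbm(5) crit1] .
    also have "\<dots> \<le> f x" proof -
      have "\<forall>i<m. lb i \<ge> 0" using crit3 by blast
      then show ?thesis using weak[of lb mub sfb sgb shb x] sbm x by blast
    qed
    finally show "f xb \<le> f x" .
  qed
  show ?thesis using dual xbXa primal pdb eq by simp
qed

end
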